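(* Assume the balanced case $\beta_0=C$ with $A=B=0$. Let $X(x)=\alpha_0x+\gamma_0$ and $Y=\alpha_0C$. Then for all $n\ge0$ and $0\le k\le n$, \[ P_n(x)=H_n(X(x),Y),\qquad w_{n,k}=\binom nk\alpha_0^{\,k}H_{n-k}(\gamma_0,Y). \]
   Context: Fix nonnegative integers $a,b,c,\alpha_0,\beta_0,\gamma_0$, $\alpha_k=ak+\alpha_0$, $\beta_k=bk+\beta_0$, $\gamma_k=ck+\gamma_0$; $w_{0,0}=1$, $w_{n,k}=0$ for $k<0$ or $k>n$, $w_{n+1,k}=\alpha_{k-1}w_{n,k-1}+\gamma_k w_{n,k}+\beta_k w_{n,k+1}$. $A=a$, $B=c$, $C=b$; balanced means $\beta_0=C$. $P_n(x)=\sum_k w_{n,k}x^k$. The Hermite–Kampé de Fériet polynomials $H_n(X,Y)$ are defined by $\sum_{n\ge0}H_n(X,Y)t^n/n!=\exp(Xt+\tfrac Y2t^2)$. *)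

theory Defs
  imports Complex_Main "HOL-Computational_Algebra.Formal_Power_Series"
begin

text \<open>The triangle w(n,k) with parameters a b c alpha0 beta0 gamma0 (all nonnegative
integers); k ranges over the integers and w(n,k) = 0 for k < 0 or k > n.
alpha_k = a k + alpha0, beta_k = b k + beta0, gamma_k = c k + gamma0.\<close>

fun wtri :: "nat \<Rightarrow> nat \<Rightarrow> nat \<Rightarrow> nat \<Rightarrow> nat \<Rightarrow> nat \<Rightarrow> nat \<Rightarrow> int \<Rightarrow> int" where
  "wtri a b c al0 be0 ga0 0 k = (if k = 0 then 1 else 0)"
| "wtri a b c al0 be0 ga0 (Suc n) k =
     (if k < 0 \<or> k > int (Suc n) then 0
      else (int a * (k - 1) + int al0) * wtri a b c al0 be0 ga0 n (k - 1)
         + (int c * k + int ga0) * wtri a b c al0 be0 ga0 n k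
         + (int b * k + int be0) * wtri a b c al0 be0 ga0 n (k + 1))"

definition Ppoly :: "nat \<Rightarrow> nat \<Rightarrow> nat \<Rightarrow> nat \<Rightarrow> nat \<Rightarrow> nat \<Rightarrow> nat \<Rightarrow> real \<Rightarrow> real" where
  "Ppoly a b c al0 be0 ga0 n x = (\<Sum>k=0..n. of_int (wtri a b c al0 be0 ga0 n (int k)) * x ^ k)"

definition HKdF :: "nat \<Rightarrow> real \<Rightarrow> real \<Rightarrow> real" where
  "HKdF n X Y = fact n *
     fps_nth (fps_exp 1 oo (fps_const X * fps_X + fps_const (Y / 2) * fps_X ^ 2)) n"

end

theory Submission
  imports Defs
begin

fun Hh :: "real \<Rightarrow> real \<Rightarrow> nat \<Rightarrow> real" where
  "Hh X Y 0 = 1"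
| "Hh X Y (Suc 0) = X"
| "Hh X Y (Suc (Suc n)) = X * Hh X Y (Suc n) + real (Suc n) * Y * Hh X Y n"

lemma H_rec: "Hh X Y (Suc m) = X * Hh X Y m + real m * Y * Hh X Y (m - 1)"
  by (cases m) auto

lemma HKdF_eq: "HKdF n X Y = Hh X Y n"
proof -
  define G :: "real fps" where "G = fps_const X * fps_X + fps_const (Y / 2) * fps_X ^ 2"
  define E where "E = fps_exp 1 oo G"
  have G0: "fps_nth G (0) = 0" by (simp add: G_def)
  have dG: "fps_deriv G = fps_const X + fps_const Y * fps_X"
    by (simp add: G_def power2_eq_square fps_deriv_mult algebra_simps)
       (metis fps_const_add field_sum_of_halves mult_2 mult.assoc distrib_left)
  have dE: "fps_deriv E = E * fps_deriv G"
    unfolding E_def using fps_compose_deriv[OF G0, of "fps_exp (1::real)"] by simp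
  have rec: "real (Suc n) * fps_nth E (Suc n) = X * fps_nth E (n) + (if n = 0 then 0 else Y * fps_nth E ((n - 1)))" for n
  proof -
    have "fps_nth (fps_deriv E) n = fps_nth (E * fps_deriv G) n" using dE by simp
    also have "\<dots> = X * fps_nth E (n) + (if n = 0 then 0 else Y * fps_nth E ((n - 1)))"
    proof -
      have "E * fps_deriv G = fps_const X * E + fps_const Y * (fps_X * E)"
        unfolding dG by (simp add: algebra_simps)
      then show ?thesis by simp
    qed
    finally show ?thesis by simp
  qed
  have E0: "fps_nth E (0) = 1" by (simp add: E_def)
  have HK: "HKdF n X Y = fact n * fps_nth E (n)" for n by (simp add: HKdF_def E_def G_def)
  have "fact n * fps_nth E (n) = Hh X Y n \<and> fact (Suc n) * fps_nth E (Suc n) = Hh X Y (Suc n)" for n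
  proof (induction n)
    case 0 then show ?case using E0 rec[of 0] by simp
  next
    case (Suc n)
    have "fact (Suc (Suc n)) * fps_nth E (Suc (Suc n)) = fact (Suc n) * (real (Suc (Suc n)) * fps_nth E (Suc (Suc n)))"
      by (simp add: algebra_simps)
    also have "\<dots> = X * (fact (Suc n) * fps_nth E (Suc n)) + real (Suc n) * Y * (fact n * fps_nth E (n))"
      using rec[of "Suc n"] by (simp add: algebra_simps)
    finally show ?case using Suc by simp
  qed
  then show ?thesis using HK by simp
qed

definition Sa :: "real \<Rightarrow> real \<Rightarrow> real \<Rightarrow> nat \<Rightarrow> real" where
  "Sa X Y Z n = (\<Sum>k\<le>n. real (n choose k) * Z^k * Hh X Y (n-k))"

lemma Sa_rec: "Sa X Y Z (Suc n) = (X + Z) * Sa X Y Z n + real n * Y * Sa X Y Z (n - 1)"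
proof -
  let ?H = "Hh X Y"
  have e1: "Sa X Y Z (Suc n) = ?H (Suc n) + (\<Sum>i\<le>n. real (n choose i) * Z^(Suc i) * ?H (n - i))
        + (\<Sum>i\<le>n. real (n choose Suc i) * Z^(Suc i) * ?H (n - i))"
    unfolding Sa_def by (subst sum.atMost_Suc_shift) (simp add: algebra_simps sum.distrib)
  have e2: "(\<Sum>i\<le>n. real (n choose i) * Z^(Suc i) * ?H (n - i)) = Z * Sa X Y Z n"
    unfolding Sa_def by (simp add: sum_distrib_left algebra_simps)
  have e3: "?H (Suc n) + (\<Sum>i\<le>n. real (n choose Suc i) * Z^(Suc i) * ?H (n - i))
      = (\<Sum>k\<le>Suc n. real (n choose k) * Z^k * ?H (Suc n - k))"
    by (subst sum.atMost_Suc_shift) simp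
  have "Sa X Y Z (Suc n) = Z * Sa X Y Z n + (\<Sum>k\<le>Suc n. real (n choose k) * Z^k * ?H (Suc n - k))"
    using e1 e2 e3 by simp
  also have "(\<Sum>k\<le>Suc n. real (n choose k) * Z^k * ?H (Suc n - k)) = (\<Sum>k\<le>n. real (n choose k) * Z^k * ?H (Suc (n - k)))"
    by (simp add: Suc_diff_le)
  also have "\<dots> = X * Sa X Y Z n + Y * (\<Sum>k\<le>n. real ((n - k) * (n choose k)) * Z^k * ?H (n - k - 1))"
    unfolding Sa_def sum_distrib_left sum.distrib[symmetric]
    by (rule sum.cong) (simp_all add: H_rec distrib_left mult_ac)
  also have "(\<Sum>k\<le>n. real ((n - k) * (n choose k)) * Z^k * ?H (n - k - 1)) = real n * Sa X Y Z (n - 1)"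
  proof (cases n)
    case 0 then show ?thesis by simp
  next
    case (Suc m)
    have "(\<Sum>k\<le>n. real ((n - k) * (n choose k)) * Z^k * ?H (n - k - 1))
        = (\<Sum>k\<le>n. real n * (real (m choose k) * Z^k * ?H (m - k)))"
      unfolding binomial_absorb_comp using Suc by (simp add: algebra_simps)
    also have "\<dots> = (\<Sum>k\<le>m. real n * (real (m choose k) * Z^k * ?H (m - k)))"
      using Suc by (simp del: of_nat_Suc)
    finally show ?thesis unfolding Sa_def using Suc by (simp add: sum_distrib_left)
  qed
  finally show ?thesis by (simp add: algebra_simps)
qed

lemma appell: "Hh (X + Z) Y n = Sa X Y Z n"
proof (induction n rule: less_induct)
  case (less n)
  show ?case
  proof (cases n)
    case 0 then show ?thesis by (simp add: Sa_def)
  next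
    case (Suc m)
    have "Hh (X + Z) Y n = (X + Z) * Hh (X + Z) Y m + real m * Y * Hh (X + Z) Y (m - 1)"
      using Suc H_rec by simp
    also have "\<dots> = Sa X Y Z n"
      using less Suc Sa_rec[of X Y Z m] by (cases m) auto
    finally show ?thesis .
  qed
qed


lemma w_out: "k < 0 \<or> k > int n \<Longrightarrow> wtri a b c al0 be0 ga0 n k = 0"
  by (cases n) auto

lemma choose_shift: "Suc k * (n choose Suc k) = (n - k) * (n choose k)"
proof (cases n)
  case 0 then show ?thesis by simp
next
  case (Suc m)
  have "(n - k) * (n choose k) = n * (m choose k)" using binomial_absorb_comp[of n k] Suc by simp
  moreover have "Suc k * (n choose Suc k) = n * (m choose k)" using Suc_times_binomial[of k m] Suc by (simp del: binomial_Suc_Suc mult_Suc mult_Suc_right)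
  ultimately show ?thesis by simp
qed

lemma alg: "(s::real) * c2 = m * c1 \<Longrightarrow> a*(c0*a^j*h0) + g*(c1*a^Suc j*h1) + s*b*(c2*a^Suc(Suc j)*h2)
   = a^Suc j*(c0*h0 + c1*(g*h1 + m*(a*b)*h2))"
proof -
  assume h: "s * c2 = m * c1"
  have "s*b*(c2*a^Suc(Suc j)*h2) = (s*c2)*b*a^Suc(Suc j)*h2" by (simp only: mult_ac)
  also have "\<dots> = a^Suc j*(c1*(m*(a*b)*h2))" unfolding h by (simp add: mult_ac)
  finally show ?thesis by (simp add: algebra_simps)
qed

lemma w_formula:
  "real_of_int (wtri 0 b 0 al0 b ga0 n (int k)) = real (n choose k) * real al0 ^ k * Hh (real ga0) (real al0 * real b) (n - k)"
proof (induction n arbitrary: k)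
  case 0 then show ?case by (cases k) auto
next
  case (Suc n)
  let ?H = "Hh (real ga0) (real al0 * real b)"
  let ?w = "wtri 0 b 0 al0 b ga0"
  show ?case
  proof (cases "k > Suc n")
    case True then show ?thesis by (simp add: w_out)
  next
    case False
    then have rw: "?w (Suc n) (int k) = int al0 * ?w n (int k - 1) + int ga0 * ?w n (int k) + (int b * int k + int b) * ?w n (int k + 1)"
      by simp
    show ?thesis
    proof (cases k)
      case 0
      have "?w (Suc n) 0 = int ga0 * ?w n 0 + int b * ?w n 1" using rw 0 by (simp add: w_out)
      then have "real_of_int (?w (Suc n) 0) = real ga0 * ?H n + real b * (real n * real al0 * ?H (n - 1))"
        using Suc.IH[of 0] Suc.IH[of 1] by simp
      then show ?thesis using 0 H_rec[of "real ga0" "real al0 * real b" n] by (simp add: algebra_simps)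
    next
      case (Suc j)
      have i1: "int k - 1 = int j" "int k + 1 = int (Suc (Suc j))" using Suc by auto
      have cs: "real (Suc (Suc j)) * real (n choose Suc (Suc j)) = real (n - Suc j) * real (n choose Suc j)"
          using choose_shift[of "Suc j" n] by (metis of_nat_mult)
      have "real_of_int (?w (Suc n) (int k)) = real al0 * (real (n choose j) * real al0 ^ j * ?H (n - j))
          + real ga0 * (real (n choose Suc j) * real al0 ^ Suc j * ?H (n - Suc j))
          + real (Suc (Suc j)) * real b * (real (n choose Suc (Suc j)) * real al0 ^ Suc (Suc j) * ?H (n - Suc (Suc j)))"
        unfolding rw i1 using Suc.IH[of j] Suc.IH[of "Suc j"] Suc.IH[of "Suc (Suc j)"] Suc
        by (simp add: algebra_simps)
      also have "\<dots> = real al0 ^ Suc j * (real (n choose j) * ?H (n - j) + real (n choose Suc j) *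
           (real ga0 * ?H (n - Suc j) + real (n - Suc j) * (real al0 * real b) * ?H (n - Suc j - 1)))"
        using alg[OF cs] by simp
      also have "\<dots> = real ((Suc n) choose k) * real al0 ^ k * ?H (Suc n - k)"
      proof (cases "j < n")
        case True
        then have "n - j = Suc (n - Suc j)" by simp
        then have "?H (n - j) = real ga0 * ?H (n - Suc j) + real (n - Suc j) * (real al0 * real b) * ?H (n - Suc j - 1)"
          using H_rec by simp
        then show ?thesis using Suc by (simp add: algebra_simps)
      next
        case False
        then have "j = n" using \<open>\<not> k > Suc n\<close> Suc by simp
        then show ?thesis using Suc by simp
      qed
      finally show ?thesis .
    qed
  qed
qed


theorem mainTheorem10:
  fixes a b c al0 be0 ga0 n :: nat
  assumes balanced: "be0 = b"
    and A0: "a = 0" and B0: "c = 0"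
  shows "(\<forall>x::real. Ppoly a b c al0 be0 ga0 n x
            = HKdF n (real al0 * x + real ga0) (real al0 * real b))
       \<and> (\<forall>k\<le>n. real_of_int (wtri a b c al0 be0 ga0 n (int k))
            = real (n choose k) * real al0 ^ k * HKdF (n - k) (real ga0) (real al0 * real b))"
proof (intro conjI allI impI)
  fix k assume "k \<le> n"
  show "real_of_int (wtri a b c al0 be0 ga0 n (int k))
            = real (n choose k) * real al0 ^ k * HKdF (n - k) (real ga0) (real al0 * real b)"
    using w_formula[of b al0 ga0 n k] by (simp add: assms HKdF_eq)
next
  fix x :: real
  have "Ppoly a b c al0 be0 ga0 n x = (\<Sum>k\<le>n. real (n choose k) * (real al0 * x) ^ k * Hh (real ga0) (real al0 * real b) (n - k))"
    unfolding Ppoly_def atLeast0AtMost using w_formula[of b al0 ga0 n]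
    by (intro sum.cong) (simp_all add: assms power_mult_distrib mult_ac)
  also have "\<dots> = Hh (real ga0 + real al0 * x) (real al0 * real b) n"
    using appell Sa_def by simp
  finally show "Ppoly a b c al0 be0 ga0 n x = HKdF n (real al0 * x + real ga0) (real al0 * real b)"
    by (simp add: HKdF_eq add.commute)
qed

end
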